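(* For all integers $3\le n\le m$, \[ \gamma_{2t}(K_n\Box K_n)\le\gamma_{2t}(K_n\Box K_m)\le\min\{2n,\ \gamma_{2t}(K_n\Box K_n)+m-n\}. \]
   Context: For a graph $G=(V,E)$, a set $S\subseteq V$ is a total $2$-dominating set if every vertex of $V$ (including those in $S$) is adjacent to at least $2$ vertices of $S$; $\gamma_{2t}(G)$ is the minimum cardinality of such a set. $G\Box H$ denotes the Cartesian product: vertex set $V(G)\times V(H)$, with $(u_1,v_1)\sim(u_2,v_2)$ iff either $u_1=u_2$ and $v_1\sim v_2$, or $v_1=v_2$ and $u_1\sim u_2$. $K_n$ is the complete graph on $n$ vertices. *)

theory Defs
  imports Main
begin

text \<open>A graph is given by a vertex set V and a symmetric irreflexive adjacency relation adj.\<close>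

definition total_2_dominating :: "'a set \<Rightarrow> ('a \<Rightarrow> 'a \<Rightarrow> bool) \<Rightarrow> 'a set \<Rightarrow> bool" where
  "total_2_dominating V adj S \<longleftrightarrow> S \<subseteq> V \<and> (\<forall>v\<in>V. card {u\<in>S. adj v u} \<ge> 2)"

text \<open>Total 2-domination number: minimum cardinality of a total 2-dominating set
  (for finite V; meaningful when such a set exists).\<close>
definition gamma_2t :: "'a set \<Rightarrow> ('a \<Rightarrow> 'a \<Rightarrow> bool) \<Rightarrow> nat" where
  "gamma_2t V adj = Min {card S | S. total_2_dominating V adj S}"

definition K_vertices :: "nat \<Rightarrow> nat set" where
  "K_vertices n = {0..<n}"

definition K_adj :: "nat \<Rightarrow> nat \<Rightarrow> bool" where
  "K_adj u v \<longleftrightarrow> u \<noteq> v"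

definition cart_vertices :: "'a set \<Rightarrow> 'b set \<Rightarrow> ('a \<times> 'b) set" where
  "cart_vertices V W = V \<times> W"

definition cart_adj :: "('a \<Rightarrow> 'a \<Rightarrow> bool) \<Rightarrow> ('b \<Rightarrow> 'b \<Rightarrow> bool) \<Rightarrow> ('a \<times> 'b) \<Rightarrow> ('a \<times> 'b) \<Rightarrow> bool" where
  "cart_adj adjG adjH p q \<longleftrightarrow>
     (fst p = fst q \<and> adjH (snd p) (snd q)) \<or> (snd p = snd q \<and> adjG (fst p) (fst q))"

definition gamma_2t_KK :: "nat \<Rightarrow> nat \<Rightarrow> nat" where
  "gamma_2t_KK n m = gamma_2t (cart_vertices (K_vertices n) (K_vertices m)) (cart_adj K_adj K_adj)"

end

theory Submission
  imports Defs
begin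

abbreviation "A2 \<equiv> cart_adj K_adj K_adj"
abbreviation "T R C S \<equiv> total_2_dominating (R \<times> C) A2 S"

lemma adj_iff[simp]: "cart_adj K_adj K_adj p q \<longleftrightarrow>
   (fst p = fst q \<and> snd p \<noteq> snd q) \<or> (snd p = snd q \<and> fst p \<noteq> fst q)"
  by (auto simp: cart_adj_def K_adj_def)

lemma two_le:
  assumes "finite S" "u \<in> S" "v \<in> S" "u \<noteq> v" "P u" "P v"
  shows "2 \<le> card {x\<in>S. P x}"
proof -
  have "{u,v} \<subseteq> {x\<in>S. P x}" using assms by auto
  moreover have "finite {x\<in>S. P x}" using assms by auto
  ultimately have "card {u,v} \<le> card {x\<in>S. P x}" by (rule card_mono[rotated])
  thus ?thesis using assms by simp
qed

lemma fiber_sum: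
  assumes "finite S" "finite I" "f ` S \<subseteq> I"
  shows "card S = (\<Sum>i\<in>I. card {x\<in>S. f x = i})"
proof -
  have "S = (\<Union>i\<in>I. {x\<in>S. f x = i})" using assms by auto
  hence "card S = card (\<Union>i\<in>I. {x\<in>S. f x = i})" by simp
  also have "\<dots> = (\<Sum>i\<in>I. card {x\<in>S. f x = i})"
    by (rule card_UN_disjoint) (use assms in auto)
  finally show ?thesis .
qed

lemma gamma_le:
  assumes "finite V" "total_2_dominating V adj S"
  shows "gamma_2t V adj \<le> card S"
proof -
  have "{card S |S. total_2_dominating V adj S} \<subseteq> {..card V}"
    using assms(1) by (auto simp: total_2_dominating_def intro: card_mono)
  hence "finite {card S |S. total_2_dominating V adj S}" by (rule finite_subset) auto
  thus ?thesis unfolding gamma_2t_def using assms(2) by (auto intro: Min_le)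
qed

lemma gamma_ex:
  assumes "finite V" "total_2_dominating V adj S"
  shows "\<exists>S'. total_2_dominating V adj S' \<and> card S' = gamma_2t V adj"
proof -
  have "{card S |S. total_2_dominating V adj S} \<subseteq> {..card V}"
    using assms(1) by (auto simp: total_2_dominating_def intro: card_mono)
  hence "finite {card S |S. total_2_dominating V adj S}" by (rule finite_subset) auto
  moreover have "{card S |S. total_2_dominating V adj S} \<noteq> {}" using assms(2) by auto
  ultimately have "Min {card S |S. total_2_dominating V adj S} \<in> {card S |S. total_2_dominating V adj S}"
    by (rule Min_in)
  thus ?thesis unfolding gamma_2t_def by auto
qed

lemma two_cols:
  assumes "finite R" "2 \<le> card R" "finite C" "c0 \<in> C" "c1 \<in> C" "c0 \<noteq> c1"
  shows "T R C (R \<times> {c0,c1})"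
  unfolding total_2_dominating_def
proof (intro conjI ballI)
  show "R \<times> {c0, c1} \<subseteq> R \<times> C" using assms by auto
next
  fix p assume p: "p \<in> R \<times> C"
  obtain a b where ab: "p = (a,b)" "a \<in> R" "b \<in> C" using p by auto
  have fin: "finite (R \<times> {c0,c1})" using assms by auto
  obtain a' where a': "a' \<in> R" "a' \<noteq> a"
  proof -
    have "card (R - {a}) \<ge> 1" using assms ab by (simp add: card_Diff_singleton)
    hence "R - {a} \<noteq> {}" by (metis card.empty not_one_le_zero)
    thus ?thesis using that by blast
  qed
  show "2 \<le> card {u \<in> R \<times> {c0, c1}. A2 p u}"
  proof (cases "b = c0")
    case True
    show ?thesis by (rule two_le[OF fin, of "(a,c1)" "(a',c0)"]) (use ab a' assms True in auto)
  next
    case F0: False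
    show ?thesis
    proof (cases "b = c1")
      case True
      show ?thesis by (rule two_le[OF fin, of "(a,c0)" "(a',c1)"]) (use ab a' assms True in auto)
    next
      case False
      show ?thesis by (rule two_le[OF fin, of "(a,c0)" "(a,c1)"]) (use ab a' assms False F0 in auto)
    qed
  qed
qed

lemma card_two_cols:
  assumes "finite R" "c0 \<noteq> c1"
  shows "card (R \<times> {c0,c1}) = 2 * card R"
  using assms by (simp add: card_cartesian_product)

text \<open>An empty column forces two elements in every row.\<close>
lemma empty_col:
  assumes "T R C S" "finite R" "finite C" "b \<in> C" "{x\<in>S. snd x = b} = {}"
  shows "2 * card R \<le> card S"
proof -
  have sub: "S \<subseteq> R \<times> C" using assms(1) by (simp add: total_2_dominating_def)
  have finS: "finite S" using sub assms by (meson finite_SigmaI finite_subset)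
  have "\<forall>a\<in>R. 2 \<le> card {x\<in>S. fst x = a}"
  proof
    fix a assume a: "a \<in> R"
    have "2 \<le> card {u\<in>S. A2 (a,b) u}" using assms(1) a assms(4)
      by (auto simp: total_2_dominating_def simp del: adj_iff)
    also have "\<dots> \<le> card {x\<in>S. fst x = a}"
      apply (rule card_mono) using finS apply simp using assms(5) by fastforce
    finally show "2 \<le> card {x\<in>S. fst x = a}" .
  qed
  hence "card R * 2 \<le> (\<Sum>a\<in>R. card {x\<in>S. fst x = a})"
    using sum_bounded_below[of R 2 "\<lambda>a. card {x\<in>S. fst x = a}"] by simp
  also have "\<dots> = card S" proof -
    have "fst ` S \<subseteq> R" using sub by auto
    thus ?thesis using fiber_sum[OF finS assms(2), of fst] by simp
  qed
  finally show ?thesis by simp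
qed

lemma empty_row:
  assumes "T R C S" "finite R" "finite C" "a \<in> R" "{x\<in>S. fst x = a} = {}"
  shows "2 * card C \<le> card S"
proof -
  have sub: "S \<subseteq> R \<times> C" using assms(1) by (simp add: total_2_dominating_def)
  have finS: "finite S" using sub assms by (meson finite_SigmaI finite_subset)
  have "\<forall>b\<in>C. 2 \<le> card {x\<in>S. snd x = b}"
  proof
    fix b assume b: "b \<in> C"
    have "2 \<le> card {u\<in>S. A2 (a,b) u}" using assms(1) b assms(4)
      by (auto simp: total_2_dominating_def simp del: adj_iff)
    also have "\<dots> \<le> card {x\<in>S. snd x = b}"
      apply (rule card_mono) using finS apply simp using assms(5) by fastforce
    finally show "2 \<le> card {x\<in>S. snd x = b}" .
  qed
  hence "card C * 2 \<le> (\<Sum>b\<in>C. card {x\<in>S. snd x = b})"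
    using sum_bounded_below[of C 2 "\<lambda>b. card {x\<in>S. snd x = b}"] by simp
  also have "\<dots> = card S" proof -
    have "snd ` S \<subseteq> C" using sub by auto
    thus ?thesis using fiber_sum[OF finS assms(3), of snd] by simp
  qed
  finally show ?thesis by simp
qed


lemma ge2_mono:
  assumes "finite S'" "X \<subseteq> {u\<in>S'. P u}" "2 \<le> card X"
  shows "2 \<le> card {u\<in>S'. P u}"
proof -
  have "card X \<le> card {u\<in>S'. P u}" by (rule card_mono) (use assms in auto)
  thus ?thesis using assms by simp
qed

lemma leaf_step:
  assumes TS: "T R C S" and fR: "finite R" and cR: "card R = n" and n3: "3 \<le> n"
    and fC: "finite C" and nC: "n < card C" and small: "card S < 2*n"
  shows "\<exists>b\<in>C. \<exists>S'. T R (C - {b}) S' \<and> card S' \<le> card S"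
proof -
  have sub: "S \<subseteq> R \<times> C" using TS by (simp add: total_2_dominating_def)
  have finS: "finite S" using sub fR fC by (meson finite_SigmaI finite_subset)
  have dom: "\<And>x y. x \<in> R \<Longrightarrow> y \<in> C \<Longrightarrow> 2 \<le> card {u\<in>S. A2 (x,y) u}"
    using TS by (auto simp: total_2_dominating_def simp del: adj_iff)
  have ne: "\<forall>b\<in>C. {x\<in>S. snd x = b} \<noteq> {}"
    using empty_col[OF TS fR fC] cR small by fastforce
  have "\<exists>b\<in>C. card {x\<in>S. snd x = b} = 1"
  proof (rule ccontr)
    assume "\<not> ?thesis"
    have "\<forall>b\<in>C. 2 \<le> card {x\<in>S. snd x = b}"
    proof
      fix b assume bC: "b \<in> C"
      have "card {x\<in>S. snd x = b} \<noteq> 1" using \<open>\<not> _\<close> bC by blast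
      moreover have "card {x\<in>S. snd x = b} \<noteq> 0" using ne bC finS by simp
      ultimately show "2 \<le> card {x\<in>S. snd x = b}" by linarith
    qed
    hence "card C * 2 \<le> (\<Sum>b\<in>C. card {x\<in>S. snd x = b})"
      using sum_bounded_below[of C 2 "\<lambda>b. card {x\<in>S. snd x = b}"] by simp
    also have "\<dots> = card S"
    proof -
      have "snd ` S \<subseteq> C" using sub by auto
      thus ?thesis using fiber_sum[OF finS fC, of snd] by simp
    qed
    finally show False using nC small by simp
  qed
  then obtain b where bC: "b \<in> C" and c1: "card {x\<in>S. snd x = b} = 1" by blast
  from c1 obtain z where z: "{x\<in>S. snd x = b} = {z}" by (rule card_1_singletonE)
  define a where "a = fst z"
  have "z \<in> S \<and> snd z = b" using z by blast
  hence zab: "z = (a,b)" unfolding a_def by (metis prod.collapse)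
  have col: "\<And>x. x \<in> S \<Longrightarrow> snd x = b \<Longrightarrow> x = (a,b)" using z zab by blast
  have abS: "(a,b) \<in> S" using z zab by blast
  have aR: "a \<in> R" using abS sub by auto
  define Ra where "Ra = {x\<in>S. fst x = a \<and> snd x \<noteq> b}"
  have Ra2: "2 \<le> card Ra"
  proof -
    have "2 \<le> card {u\<in>S. A2 (a,b) u}" using dom aR bC by blast
    also have "\<dots> \<le> card Ra" unfolding Ra_def
      apply (rule card_mono) using finS apply simp using col by fastforce
    finally show ?thesis .
  qed
  define C1 where "C1 = C - {b}"
  have cC1: "card C1 = card C - 1" unfolding C1_def using bC by (simp add: card_Diff_singleton)
  show ?thesis
  proof (cases "\<exists>b3\<in>C1. (a,b3) \<notin> S")
    case True
    then obtain b3 where b3: "b3 \<in> C1" "(a,b3) \<notin> S" by blast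
    define S' where "S' = insert (a,b3) (S - {(a,b)})"
    have finS': "finite S'" using finS S'_def by simp
    have cS': "card S' = card S" unfolding S'_def
    proof -
      have "card S \<ge> 1" using finS abS by (metis card_0_eq empty_iff less_one not_le)
      thus "card (insert (a, b3) (S - {(a, b)})) = card S" using b3 finS abS
        by (simp add: card_Diff_singleton)
    qed
    have "T R C1 S'" unfolding total_2_dominating_def
    proof (intro conjI ballI)
      show "S' \<subseteq> R \<times> C1" unfolding S'_def C1_def using sub col aR b3 C1_def by fastforce
    next
      fix p assume p: "p \<in> R \<times> C1"
      obtain x y where xy: "p = (x,y)" "x \<in> R" "y \<in> C1" using p by auto
      define N where "N = {u\<in>S. A2 (x,y) u}"
      have N2: "2 \<le> card N" unfolding N_def using dom xy C1_def by auto
      have finN: "finite N" unfolding N_def using finS by simp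
      show "2 \<le> card {u\<in>S'. A2 p u}"
      proof (cases "x = a \<and> y = b3")
        case True
        show ?thesis
          by (rule ge2_mono[OF finS' _ Ra2]) (use True xy b3 in \<open>auto simp: Ra_def S'_def\<close>)
      next
        case False
        show ?thesis
        proof (cases "x = a")
          case xa: True
          have "(a,b3) \<notin> N" using b3 N_def by auto
          hence "card (insert (a,b3) (N - {(a,b)})) = card (N - {(a,b)}) + 1"
            using finN by simp
          also have "\<dots> \<ge> card N" by (cases "(a,b) \<in> N") (auto simp add: card_Diff_singleton_if)
          finally have "2 \<le> card (insert (a,b3) (N - {(a,b)}))" using N2 by linarith
          thus ?thesis
            by (rule ge2_mono[OF finS', rotated]) (use xa False xy in \<open>auto simp: N_def S'_def\<close>)
        next
          case xa: False
          show ?thesis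
            by (rule ge2_mono[OF finS' _ N2]) (use xa xy C1_def in \<open>auto simp: N_def S'_def\<close>)
        qed
      qed
    qed
    hence "T R (C - {b}) S'" unfolding C1_def .
    thus ?thesis using bC cS' by (intro bexI[OF _ bC] exI[of _ S'] conjI) simp_all
  next
    case False
    define S' where "S' = S - {(a,b)}"
    have finS': "finite S'" using finS S'_def by simp
    have cS': "card S' \<le> card S" unfolding S'_def using finS by (simp add: card_Diff_singleton_if)
    have "T R C1 S'" unfolding total_2_dominating_def
    proof (intro conjI ballI)
      show "S' \<subseteq> R \<times> C1" unfolding S'_def C1_def using sub col by fastforce
    next
      fix p assume p: "p \<in> R \<times> C1"
      obtain x y where xy: "p = (x,y)" "x \<in> R" "y \<in> C1" using p by auto
      define N where "N = {u\<in>S. A2 (x,y) u}"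
      have N2: "2 \<le> card N" unfolding N_def using dom xy C1_def by auto
      show "2 \<le> card {u\<in>S'. A2 p u}"
      proof (cases "x = a")
        case xa: True
        have fC1: "finite C1" using fC C1_def by simp
        have "card ((\<lambda>z. (a,z)) ` (C1 - {y})) = card (C1 - {y})"
          by (rule card_image) (auto simp: inj_on_def)
        also have "\<dots> = card C1 - 1" using xy by (simp add: card_Diff_singleton)
        finally have "2 \<le> card ((\<lambda>z. (a,z)) ` (C1 - {y}))" using cC1 nC n3 by linarith
        thus ?thesis
          by (rule ge2_mono[OF finS', rotated]) (use xa xy False in \<open>auto simp: S'_def C1_def\<close>)
      next
        case xa: False
        show ?thesis
          by (rule ge2_mono[OF finS' _ N2]) (use xa xy C1_def in \<open>auto simp: N_def S'_def\<close>)
      qed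
    qed
    hence "T R (C - {b}) S'" unfolding C1_def .
    thus ?thesis using bC cS' by (intro bexI[OF _ bC] exI[of _ S'] conjI) simp_all
  qed
qed


lemma pick_two:
  assumes "finite C" "2 \<le> card C"
  obtains c0 c1 where "c0 \<in> C" "c1 \<in> C" "c0 \<noteq> c1"
proof -
  have "C \<noteq> {}" using assms by auto
  then obtain c0 where c0: "c0 \<in> C" by blast
  have "card (C - {c0}) \<ge> 1" using assms c0 by (simp add: card_Diff_singleton)
  hence "C - {c0} \<noteq> {}" by (metis card.empty not_one_le_zero)
  then obtain c1 where "c1 \<in> C - {c0}" by blast
  thus ?thesis using that c0 by blast
qed

lemma reduce:
  assumes fR: "finite R" and cR: "card R = n" and n3: "3 \<le> n"
  shows "\<forall>C S. finite C \<longrightarrow> card C = k \<longrightarrow> n \<le> k \<longrightarrow> T R C S \<longrightarrow>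
     (\<exists>C' S'. C' \<subseteq> C \<and> finite C' \<and> card C' = n \<and> T R C' S' \<and> card S' \<le> card S)"
proof (induction k)
  case 0
  then show ?case using n3 by auto
next
  case (Suc k)
  show ?case
  proof (intro allI impI)
    fix C S assume fC: "finite C" and cC: "card C = Suc k" and nk: "n \<le> Suc k" and TS: "T R C S"
    show "\<exists>C' S'. C' \<subseteq> C \<and> finite C' \<and> card C' = n \<and> T R C' S' \<and> card S' \<le> card S"
    proof (cases "Suc k = n")
      case True
      thus ?thesis using fC cC TS by blast
    next
      case False
      hence nk': "n \<le> k" using nk by simp
      show ?thesis
      proof (cases "2*n \<le> card S")
        case True
        obtain C' where C': "C' \<subseteq> C" "card C' = n"
          using obtain_subset_with_card_n[of n C] nk cC by auto
        have fC': "finite C'" using C' fC finite_subset by blast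
        obtain c0 c1 where cc: "c0 \<in> C'" "c1 \<in> C'" "c0 \<noteq> c1"
          using pick_two[OF fC'] C' n3 by auto
        have "T R C' (R \<times> {c0,c1})" by (rule two_cols) (use fR cR n3 fC' cc in auto)
        moreover have "card (R \<times> {c0,c1}) \<le> card S" using card_two_cols[OF fR cc(3)] cR True by simp
        ultimately show ?thesis using C' fC' by blast
      next
        case False
        obtain b S' where b: "b \<in> C" and TS': "T R (C - {b}) S'" and cS': "card S' \<le> card S"
          using leaf_step[OF TS fR cR n3 fC _ _] False nk' cC by force
        have "\<exists>C' S''. C' \<subseteq> C - {b} \<and> finite C' \<and> card C' = n \<and> T R C' S'' \<and> card S'' \<le> card S'"
        proof -
          have "card (C - {b}) = k" using b cC by (simp add: card_Diff_singleton)
          moreover have "finite (C - {b})" using fC by simp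
          ultimately show ?thesis using Suc.IH[rule_format, OF _ _ nk' TS'] by blast
        qed
        then obtain C' S'' where h: "C' \<subseteq> C - {b}" "finite C'" "card C' = n" "T R C' S''" "card S'' \<le> card S'"
          by blast
        have "C' \<subseteq> C" using h(1) by blast
        moreover have "card S'' \<le> card S" using h(5) cS' by linarith
        ultimately show ?thesis using h by blast
      qed
    qed
  qed
qed

lemma transfer:
  assumes bij: "bij_betw f C D" and TS: "T R C S"
  shows "T R D (map_prod id f ` S) \<and> card (map_prod id f ` S) = card S"
proof -
  have sub: "S \<subseteq> R \<times> C" using TS by (simp add: total_2_dominating_def)
  have injf: "inj_on f C" using bij by (simp add: bij_betw_def)
  have inj: "inj_on (map_prod id f) (R \<times> C)"
    using injf by (auto simp: inj_on_def)
  have injS: "inj_on (map_prod id f) S" using inj sub by (rule inj_on_subset)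
  have "T R D (map_prod id f ` S)" unfolding total_2_dominating_def
  proof (intro conjI ballI)
    show "map_prod id f ` S \<subseteq> R \<times> D" using sub bij by (auto simp: bij_betw_def)
  next
    fix p assume p: "p \<in> R \<times> D"
    then obtain x y where xy: "x \<in> R" "y \<in> C" "p = (x, f y)"
      using bij by (auto simp: bij_betw_def)
    have eq: "{u \<in> map_prod id f ` S. A2 p u} = map_prod id f ` {u\<in>S. A2 (x,y) u}"
    proof (rule set_eqI, rule iffI)
      fix w assume "w \<in> {u \<in> map_prod id f ` S. A2 p u}"
      then obtain u where u: "u \<in> S" "w = map_prod id f u" "A2 p w" by auto
      have "snd u \<in> C" using u sub by auto
      hence "A2 (x,y) u" using u xy injf xy(2) by (auto simp: inj_on_def map_prod_def split: prod.splits)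
      thus "w \<in> map_prod id f ` {u\<in>S. A2 (x,y) u}" using u by auto
    next
      fix w assume "w \<in> map_prod id f ` {u\<in>S. A2 (x,y) u}"
      then obtain u where u: "u \<in> S" "w = map_prod id f u" "A2 (x,y) u" by auto
      have "snd u \<in> C" using u sub by auto
      hence "A2 p w" using u xy injf by (auto simp: inj_on_def map_prod_def split: prod.splits)
      thus "w \<in> {u \<in> map_prod id f ` S. A2 p u}" using u by auto
    qed
    have "2 \<le> card {u\<in>S. A2 (x,y) u}" using TS xy
      by (auto simp: total_2_dominating_def simp del: adj_iff)
    also have "\<dots> = card (map_prod id f ` {u\<in>S. A2 (x,y) u})"
      by (rule card_image[symmetric]) (rule inj_on_subset[OF injS], auto)
    finally show "2 \<le> card {u \<in> map_prod id f ` S. A2 p u}" using eq by simp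
  qed
  thus ?thesis using card_image[OF injS] by simp
qed


lemma extend:
  assumes TS: "T {0..<n} {0..<n} S" and n3: "3 \<le> n" and small: "card S < 2*n" and nm: "n \<le> m"
  shows "\<exists>S'. T {0..<n} {0..<m} S' \<and> card S' \<le> card S + (m - n)"
proof -
  let ?R = "{0..<n::nat}"
  have sub: "S \<subseteq> ?R \<times> ?R" using TS by (simp add: total_2_dominating_def)
  have finS: "finite S" using sub by (meson finite_SigmaI finite_atLeastLessThan finite_subset)
  have dom: "\<And>x y. x \<in> ?R \<Longrightarrow> y \<in> ?R \<Longrightarrow> 2 \<le> card {u\<in>S. A2 (x,y) u}"
    using TS by (auto simp: total_2_dominating_def simp del: adj_iff)
  have rowne: "\<forall>a\<in>?R. {x\<in>S. fst x = a} \<noteq> {}"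
    using empty_row[OF TS] small by fastforce
  have colne: "\<forall>b\<in>?R. {x\<in>S. snd x = b} \<noteq> {}"
    using empty_col[OF TS] small by fastforce
  have "\<exists>r\<in>?R. 2 \<le> card {x\<in>S. fst x = r}"
  proof (rule ccontr)
    assume H: "\<not> ?thesis"
    have one: "\<forall>a\<in>?R. card {x\<in>S. fst x = a} = 1"
    proof
      fix a assume a: "a \<in> ?R"
      have "card {x\<in>S. fst x = a} \<noteq> 0" using rowne a finS by simp
      moreover have "\<not> 2 \<le> card {x\<in>S. fst x = a}" using H a by blast
      ultimately show "card {x\<in>S. fst x = a} = 1" by linarith
    qed
    have "card S = (\<Sum>a\<in>?R. card {x\<in>S. fst x = a})"
      by (rule fiber_sum[OF finS]) (use sub in auto)
    also have "\<dots> = n" using one by simp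
    finally have cS: "card S = n" .
    obtain x where x: "x \<in> S" using rowne n3 by fastforce
    obtain a b where ab: "x = (a,b)" by (cases x)
    have aR: "a \<in> ?R" and bR: "b \<in> ?R" using x ab sub by auto
    have rowa: "{y\<in>S. fst y = a} = {x}"
    proof -
      have "card {y\<in>S. fst y = a} = 1" using one aR by blast
      then obtain z where "{y\<in>S. fst y = a} = {z}" by (rule card_1_singletonE)
      moreover have "x \<in> {y\<in>S. fst y = a}" using x ab by simp
      ultimately show ?thesis by (metis singletonD)
    qed
    define N where "N = {u\<in>S. A2 (a,b) u}"
    have N2: "2 \<le> card N" unfolding N_def using dom aR bR by blast
    have "insert x N \<subseteq> {y\<in>S. snd y = b}"
    proof
      fix u assume u: "u \<in> insert x N"
      show "u \<in> {y\<in>S. snd y = b}"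
      proof (cases "u = x")
        case True thus ?thesis using x ab by simp
      next
        case False
        hence uS: "u \<in> S" and adj: "A2 (a,b) u" using u unfolding N_def by auto
        have "\<not> (fst u = a)"
        proof
          assume "fst u = a"
          hence "u \<in> {y\<in>S. fst y = a}" using uS by simp
          hence "u = x" using rowa by simp
          thus False using False by simp
        qed
        hence "snd u = b" using adj by simp
        thus ?thesis using uS by simp
      qed
    qed
    moreover have "x \<notin> N" unfolding N_def using ab by simp
    moreover have "finite N" unfolding N_def using finS by simp
    ultimately have col3: "3 \<le> card {y\<in>S. snd y = b}"
      using N2 card_mono[of "{y\<in>S. snd y = b}" "insert x N"] finS by simp
    have "card S = (\<Sum>c\<in>?R. card {y\<in>S. snd y = c})"
      by (rule fiber_sum[OF finS]) (use sub in auto)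
    also have "\<dots> = card {y\<in>S. snd y = b} + (\<Sum>c\<in>?R - {b}. card {y\<in>S. snd y = c})"
      by (rule sum.remove[OF finite_atLeastLessThan bR])
    also have "(\<Sum>c\<in>?R - {b}. card {y\<in>S. snd y = c}) \<ge> card (?R - {b}) * 1"
      using sum_bounded_below[of "?R - {b}" 1 "\<lambda>c. card {y\<in>S. snd y = c}"] colne finS
      by (simp add: Suc_le_eq card_gt_0_iff)
    hence "card {y\<in>S. snd y = b} + (\<Sum>c\<in>?R - {b}. card {y\<in>S. snd y = c}) \<ge> 3 + (n - 1)"
      using col3 bR by (simp add: card_Diff_singleton)
    ultimately show False using cS n3 by linarith
  qed
  then obtain r where rR: "r \<in> ?R" and r2: "2 \<le> card {x\<in>S. fst x = r}" by blast
  define S' where "S' = S \<union> ({r} \<times> {n..<m})"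
  have finS': "finite S'" unfolding S'_def using finS by simp
  have "card S' \<le> card S + card ({r} \<times> {n..<m})" unfolding S'_def by (rule card_Un_le)
  hence cS': "card S' \<le> card S + (m - n)" by (simp add: card_cartesian_product)
  have "T {0..<n} {0..<m} S'" unfolding total_2_dominating_def
  proof (intro conjI ballI)
    show "S' \<subseteq> {0..<n} \<times> {0..<m}" unfolding S'_def using sub rR nm by auto
  next
    fix p assume p: "p \<in> {0..<n} \<times> {0..<m::nat}"
    obtain x y where xy: "p = (x,y)" "x \<in> ?R" "y < m" using p by auto
    show "2 \<le> card {u\<in>S'. A2 p u}"
    proof (cases "y < n")
      case True
      have "2 \<le> card {u\<in>S. A2 (x,y) u}" using dom xy True by simp
      thus ?thesis by (rule ge2_mono[OF finS', rotated]) (use xy in \<open>auto simp: S'_def\<close>)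
    next
      case yn: False
      show ?thesis
      proof (cases "x = r")
        case True
        show ?thesis by (rule ge2_mono[OF finS' _ r2]) (use xy True yn sub in \<open>auto simp: S'_def\<close>)
      next
        case False
        obtain z where z: "z \<in> S" "fst z = x" using rowne xy by blast
        have "snd z < n" using z sub by auto
        show ?thesis
          by (rule two_le[OF finS', of "(r,y)" z]) (use z xy yn False \<open>snd z < n\<close> in \<open>auto simp: S'_def\<close>)
      qed
    qed
  qed
  thus ?thesis using cS' by blast
qed


lemma KK_unfold: "gamma_2t_KK n m = gamma_2t ({0..<n} \<times> {0..<m}) A2"
  by (simp add: gamma_2t_KK_def cart_vertices_def K_vertices_def)

lemma KK_exists:
  assumes "3 \<le> n" "2 \<le> m"
  shows "T {0..<n} {0..<m} ({0..<n} \<times> {0,1})"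
  by (rule two_cols) (use assms in auto)

theorem proposition16:
  fixes n m :: nat
  assumes "3 \<le> n" and "n \<le> m"
  shows "gamma_2t_KK n n \<le> gamma_2t_KK n m \<and>
         gamma_2t_KK n m \<le> min (2 * n) (gamma_2t_KK n n + (m - n))"
proof -
  have fin: "\<And>(a::nat) (b::nat). finite ({0..<a} \<times> {0..<b})" by simp
  have E1: "T {0..<n} {0..<m} ({0..<n} \<times> {0,1})" using KK_exists assms by simp
  have E2: "T {0..<n} {0..<n} ({0..<n} \<times> {0,1})" using KK_exists assms by simp
  have c2: "card ({0..<n::nat} \<times> {0::nat,1}) = 2 * n" by (simp add: card_cartesian_product)
  have up1: "gamma_2t_KK n m \<le> 2 * n"
    using gamma_le[OF fin E1] c2 by (simp add: KK_unfold)
  have low: "gamma_2t_KK n n \<le> gamma_2t_KK n m"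
  proof -
    obtain S where TS: "T {0..<n} {0..<m} S" and cS: "card S = gamma_2t_KK n m"
      using gamma_ex[OF fin E1] by (auto simp: KK_unfold)
    obtain C' S' where h: "C' \<subseteq> {0..<m}" "finite C'" "card C' = n" "T {0..<n} C' S'"
        "card S' \<le> card S"
    proof -
      have "\<exists>C' S'. C' \<subseteq> {0..<m} \<and> finite C' \<and> card C' = n \<and> T {0..<n} C' S' \<and> card S' \<le> card S"
        apply (rule reduce[of "{0..<n}" n m, rule_format])
        using assms TS by simp_all
      thus ?thesis using that by blast
    qed
    obtain f where f: "bij_betw f C' {0..<n}" using ex_bij_betw_finite_nat[OF h(2)] h(3) by auto
    have tr: "T {0..<n} {0..<n} (map_prod id f ` S') \<and> card (map_prod id f ` S') = card S'"
      by (rule transfer[OF f h(4)])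
    have "gamma_2t ({0..<n} \<times> {0..<n}) A2 \<le> card (map_prod id f ` S')"
      by (rule gamma_le[OF fin]) (use tr in blast)
    hence "gamma_2t_KK n n \<le> card S'" using tr by (simp add: KK_unfold)
    thus ?thesis using h(5) cS by linarith
  qed
  have up2: "gamma_2t_KK n m \<le> gamma_2t_KK n n + (m - n)"
  proof -
    obtain S where TS: "T {0..<n} {0..<n} S" and cS: "card S = gamma_2t_KK n n"
      using gamma_ex[OF fin E2] by (auto simp: KK_unfold)
    show ?thesis
    proof (cases "2 * n \<le> card S")
      case True thus ?thesis using up1 cS by linarith
    next
      case False
      obtain S' where "T {0..<n} {0..<m} S'" "card S' \<le> card S + (m - n)"
        using extend[OF TS assms(1) _ assms(2)] False by auto
      moreover have "gamma_2t_KK n m \<le> card S'"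
        using gamma_le[OF fin calculation(1)] by (simp add: KK_unfold)
      ultimately show ?thesis using cS by linarith
    qed
  qed
  show ?thesis using low up1 up2 by simp
qed

end
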